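(* Let $P$ be a natural unit interval order. For every finite multiset $\beta$ of elements of $P$, $W_\beta(t)\in(I^P_T)^\perp$. Moreover, $\{W_\beta(t)\}$, as $\beta$ ranges over all finite multisets of elements of $P$, is a $\mathbb{Q}(t)$-basis of $(I^P_T)^\perp\subseteq\mathbb{Q}(t)\otimes\mathcal{U}_P^*$.
   Context: A natural unit interval order is a finite poset $P$ with a total order $<$ on $P$ such that $a<_Pb$ implies $a<b$, and if $a\sim_Pb$, $b\sim_Pc$, $a<_Pc$ then $a<b<c$ (here $\sim_P$ means incomparable or equal). $\mathcal{U}_P=\mathbb{Z}\langle u_a:a\in P\rangle$; $\mathcal{U}_P^*$ is the free module on words in $P$, with pairing $\langle\mathbf{u}_w,v\rangle=\delta_{vw}$ extended $\mathbb{Q}(t)$-bilinearly; $I^\perp$ is the set of $\gamma$ with $\langle z,\gamma\rangle=0$ for all $z\in I$. $I^P_T\subseteq\mathbb{Q}(t)\otimes\mathcal{U}_P$ is the ideal generated by $u_cu_a-u_au_c$ ($a<_Pc$) and $u_bu_a-t\,u_au_b$ ($a<b$, $a\sim_Pb$). For a word $w$, $\mathrm{inv}_P(w)=\#\{(i,j): i<j,\ w_i>w_j,\ w_i\sim_Pw_j\}$. The content of a word is its multiset of letters; $W_\beta(t)=\sum t^{\mathrm{inv}_P(w)}w$ over all words $w$ of content $\beta$. *)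

theory Defs
  imports "HOL-Computational_Algebra.Polynomial" "HOL-Computational_Algebra.Fraction_Field"
          "HOL-Library.Multiset" "HOL-Library.Function_Algebras"
begin

type_synonym qt = "rat poly fract"

definition tt :: qt where "tt = Fract [:0, 1:] 1"

text \<open>P is a finite set of elements of a linearly ordered type; the type's order is
  the total order <.  ltP is the strict order of the poset P.\<close>

definition incP :: "('a \<Rightarrow> 'a \<Rightarrow> bool) \<Rightarrow> 'a \<Rightarrow> 'a \<Rightarrow> bool" where
  "incP ltP a b \<longleftrightarrow> \<not> ltP a b \<and> \<not> ltP b a"

definition nuio :: "'a::linorder set \<Rightarrow> ('a \<Rightarrow> 'a \<Rightarrow> bool) \<Rightarrow> bool" where
  "nuio P ltP \<longleftrightarrow> finite P
     \<and> (\<forall>a\<in>P. \<not> ltP a a)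
     \<and> (\<forall>a\<in>P. \<forall>b\<in>P. \<forall>c\<in>P. ltP a b \<and> ltP b c \<longrightarrow> ltP a c)
     \<and> (\<forall>a\<in>P. \<forall>b\<in>P. ltP a b \<longrightarrow> a < b)
     \<and> (\<forall>a\<in>P. \<forall>b\<in>P. \<forall>c\<in>P. incP ltP a b \<and> incP ltP b c \<and> ltP a c \<longrightarrow> a < b \<and> b < c)"

text \<open>Elements of Q(t) \<otimes> U_P and of Q(t) \<otimes> U_P^*: finitely supported Q(t)-valued
  functions on words, supported on words with letters in P.\<close>
definition fsupp :: "'a set \<Rightarrow> ('a list \<Rightarrow> qt) set" where
  "fsupp P = {f. finite {w. f w \<noteq> 0} \<and> (\<forall>w. f w \<noteq> 0 \<longrightarrow> set w \<subseteq> P)}"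

definition word :: "'a list \<Rightarrow> 'a list \<Rightarrow> qt" where
  "word v = (\<lambda>w. if w = v then 1 else 0)"

definition fmult :: "('a list \<Rightarrow> qt) \<Rightarrow> ('a list \<Rightarrow> qt) \<Rightarrow> 'a list \<Rightarrow> qt" where
  "fmult f g = (\<lambda>w. \<Sum>i\<le>length w. f (take i w) * g (drop i w))"

definition scal :: "qt \<Rightarrow> ('a list \<Rightarrow> qt) \<Rightarrow> 'a list \<Rightarrow> qt" where
  "scal c f = (\<lambda>w. c * f w)"

definition gensT :: "'a::linorder set \<Rightarrow> ('a \<Rightarrow> 'a \<Rightarrow> bool) \<Rightarrow> ('a list \<Rightarrow> qt) set" where
  "gensT P ltP =
     {word [c, a] - word [a, c] | a c. a \<in> P \<and> c \<in> P \<and> ltP a c}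
   \<union> {word [b, a] - scal tt (word [a, b]) | a b. a \<in> P \<and> b \<in> P \<and> a < b \<and> incP ltP a b}"

inductive_set ideal_gen :: "'a set \<Rightarrow> ('a list \<Rightarrow> qt) set \<Rightarrow> ('a list \<Rightarrow> qt) set"
  for P G where
  gen: "r \<in> G \<Longrightarrow> r \<in> ideal_gen P G"
| zero: "0 \<in> ideal_gen P G"
| add: "x \<in> ideal_gen P G \<Longrightarrow> y \<in> ideal_gen P G \<Longrightarrow> x + y \<in> ideal_gen P G"
| lmult: "x \<in> ideal_gen P G \<Longrightarrow> a \<in> fsupp P \<Longrightarrow> fmult a x \<in> ideal_gen P G"
| rmult: "x \<in> ideal_gen P G \<Longrightarrow> a \<in> fsupp P \<Longrightarrow> fmult x a \<in> ideal_gen P G"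

definition IT :: "'a::linorder set \<Rightarrow> ('a \<Rightarrow> 'a \<Rightarrow> bool) \<Rightarrow> ('a list \<Rightarrow> qt) set" where
  "IT P ltP = ideal_gen P (gensT P ltP)"

text \<open>The pairing: <u_w, v> = delta_{vw}, extended bilinearly.\<close>
definition pairing :: "('a list \<Rightarrow> qt) \<Rightarrow> ('a list \<Rightarrow> qt) \<Rightarrow> qt" where
  "pairing z \<gamma> = (\<Sum>w\<in>{w. z w \<noteq> 0}. z w * \<gamma> w)"

definition perp :: "'a set \<Rightarrow> ('a list \<Rightarrow> qt) set \<Rightarrow> ('a list \<Rightarrow> qt) set" where
  "perp P I = {\<gamma> \<in> fsupp P. \<forall>z\<in>I. pairing z \<gamma> = 0}"

definition invP :: "('a::linorder \<Rightarrow> 'a \<Rightarrow> bool) \<Rightarrow> 'a list \<Rightarrow> nat" where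
  "invP ltP w = card {(i, j). i < j \<and> j < length w \<and> w ! i > w ! j \<and> incP ltP (w ! i) (w ! j)}"

definition Wt :: "('a::linorder \<Rightarrow> 'a \<Rightarrow> bool) \<Rightarrow> 'a multiset \<Rightarrow> 'a list \<Rightarrow> qt" where
  "Wt ltP \<beta> = (\<lambda>w. if mset w = \<beta> then tt ^ invP ltP w else 0)"

end

theory Submission
  imports Defs
begin


definition invR :: "('a \<Rightarrow> 'a \<Rightarrow> bool) \<Rightarrow> 'a list \<Rightarrow> nat" where
  "invR R w = card {(i, j). i < j \<and> j < length w \<and> R (w ! i) (w ! j)}"

lemma invP_invR: "invP ltP w = invR (\<lambda>x y. x > y \<and> incP ltP x y) w"
  by (simp add: invP_def invR_def)

lemma invR_Nil[simp]: "invR R [] = 0"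
  by (simp add: invR_def)

lemma invR_Cons: "invR R (a # w) = length (filter (R a) w) + invR R w"
proof -
  let ?S = "\<lambda>w. {(i, j). i < j \<and> j < length w \<and> R (w ! i) (w ! j)}"
  let ?A = "(\<lambda>j. (0::nat, Suc j)) ` {j. j < length w \<and> R a (w ! j)}"
  let ?B = "(\<lambda>(i, j). (Suc i, Suc j)) ` ?S w"
  have fin: "finite (?S w)"
    by (rule finite_subset[of _ "{..<length w} \<times> {..<length w}"]) auto
  have eq: "?S (a # w) = ?A \<union> ?B"
  proof (rule set_eqI)
    fix p :: "nat \<times> nat"
    obtain i j where p: "p = (i, j)" by (cases p)
    show "p \<in> ?S (a # w) \<longleftrightarrow> p \<in> ?A \<union> ?B"
    proof
      assume "p \<in> ?S (a # w)"
      then have h: "i < j" "j < Suc (length w)" "R ((a # w) ! i) ((a # w) ! j)" using p by auto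
      then obtain j' where j: "j = Suc j'" by (cases j) auto
      show "p \<in> ?A \<union> ?B"
      proof (cases i)
        case 0
        then show ?thesis using h j p by auto
      next
        case (Suc i')
        then have "(i', j') \<in> ?S w" using h j by auto
        then show ?thesis using p Suc j by (auto intro!: image_eqI[of _ _ "(i', j')"])
      qed
    next
      assume "p \<in> ?A \<union> ?B"
      then show "p \<in> ?S (a # w)" using p by auto
    qed
  qed
  have disj: "?A \<inter> ?B = {}" by auto
  have "card (?S (a # w)) = card ?A + card ?B"
    unfolding eq by (rule card_Un_disjoint) (use fin in auto)
  also have "card ?A = card {j. j < length w \<and> R a (w ! j)}"
    by (rule card_image) (auto simp: inj_on_def)
  also have "\<dots> = length (filter (R a) w)" by (simp add: length_filter_conv_card)
  also have "card ?B = card (?S w)"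
    by (rule card_image) (auto simp: inj_on_def)
  finally show ?thesis by (simp add: invR_def)
qed

lemma length_filter_mset: "mset z1 = mset z2 \<Longrightarrow> length (filter P z1) = length (filter P z2)"
  by (metis mset_filter size_mset)

lemma invR_append_cong:
  assumes "mset z1 = mset z2" "invR R z1 + k = invR R z2 + m"
  shows "invR R (x @ z1) + k = invR R (x @ z2) + m"
  using assms
proof (induction x)
  case Nil then show ?case by simp
next
  case (Cons e x)
  have "length (filter (R e) (x @ z1)) = length (filter (R e) (x @ z2))"
    by (rule length_filter_mset) (use Cons.prems in simp)
  then show ?case using Cons by (simp add: invR_Cons)
qed

lemma invR_swap:
  "invR R (x @ [b, a] @ y) + (if R a b then 1 else 0) = invR R (x @ [a, b] @ y) + (if R b a then 1 else 0)"
  by (rule invR_append_cong) (auto simp: invR_Cons)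

lemma sorted_invR: "sorted w \<Longrightarrow> invR (\<lambda>x y. x > y \<and> Q x y) w = 0"
proof -
  assume s: "sorted w"
  have E: "{(i, j). i < j \<and> j < length w \<and> w ! i > w ! j \<and> Q (w ! i) (w ! j)} = {}"
  proof (rule equals0I)
    fix p assume "p \<in> {(i, j). i < j \<and> j < length w \<and> w ! i > w ! j \<and> Q (w ! i) (w ! j)}"
    then obtain i j where "i < j" "j < length w" "w ! i > w ! j" by auto
    moreover have "w ! i \<le> w ! j" using sorted_nth_mono[OF s, of i j] \<open>i < j\<close> \<open>j < length w\<close> by simp
    ultimately show False by simp
  qed
  show ?thesis unfolding invR_def by (simp only: E card.empty)
qed

lemma sorted_invR': "sorted w \<Longrightarrow> invR (\<lambda>x y. x > y) w = 0"
  using sorted_invR[of w "\<lambda>x y. True"] by simp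

lemma not_sorted_descent:
  "\<not> sorted (w::'a::linorder list) \<Longrightarrow> \<exists>x b a y. w = x @ [b, a] @ y \<and> a < b"
proof (induction w)
  case Nil then show ?case by simp
next
  case (Cons c w)
  note IH = Cons.IH and ns = Cons.prems
  show ?case
  proof (cases w)
    case Nil then show ?thesis using ns by simp
  next
    case (Cons d r)
    show ?thesis
    proof (cases "d < c")
      case True
      then show ?thesis using Cons by (auto intro!: exI[of _ "[]"])
    next
      case False
      then have "\<not> sorted w" using Cons ns by (auto simp: not_less intro: order_trans)
      then obtain x b a y where "w = x @ [b, a] @ y" "a < b" using IH by blast
      then show ?thesis by (auto intro!: exI[of _ "c # x"])
    qed
  qed
qed



lemma tt_nz: "tt \<noteq> 0" unfolding tt_def by (simp add: Zero_fract_def eq_fract)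

lemma sum_fun_apply: "(sum f A) x = sum (\<lambda>a. f a x) A"
  by (induction A rule: infinite_finite_induct) auto

abbreviation fin :: "('a list \<Rightarrow> qt) \<Rightarrow> bool" where "fin z \<equiv> finite {w. z w \<noteq> 0}"

lemma pairing_superset:
  assumes "finite S" "{w. z w \<noteq> 0} \<subseteq> S"
  shows "pairing z \<gamma> = (\<Sum>w\<in>S. z w * \<gamma> w)"
  unfolding pairing_def by (rule sum.mono_neutral_left) (use assms in auto)

lemma fin_add: "fin z1 \<Longrightarrow> fin z2 \<Longrightarrow> fin (z1 + z2)"
  by (rule finite_subset[of _ "{w. z1 w \<noteq> 0} \<union> {w. z2 w \<noteq> 0}"]) auto

lemma fin_scal: "fin z \<Longrightarrow> fin (scal c z)"
  by (rule finite_subset[of _ "{w. z w \<noteq> 0}"]) (auto simp: scal_def)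

lemma fin_sum: "finite A \<Longrightarrow> (\<And>k. k \<in> A \<Longrightarrow> fin (f k)) \<Longrightarrow> fin (\<Sum>k\<in>A. f k)"
proof (induction A rule: finite_induct)
  case empty then show ?case by simp
next
  case (insert x F)
  have "fin (f x + (\<Sum>k\<in>F. f k))" by (rule fin_add) (use insert in auto)
  then show ?case by (simp only: sum.insert[OF insert(1,2)])
qed

lemma pairing_add:
  assumes "fin z1" "fin z2"
  shows "pairing (z1 + z2) \<gamma> = pairing z1 \<gamma> + pairing z2 \<gamma>"
proof -
  let ?S = "{w. z1 w \<noteq> 0} \<union> {w. z2 w \<noteq> 0}"
  have "pairing (z1 + z2) \<gamma> = (\<Sum>w\<in>?S. (z1 + z2) w * \<gamma> w)"
    by (rule pairing_superset) (use assms in auto)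
  also have "\<dots> = (\<Sum>w\<in>?S. z1 w * \<gamma> w) + (\<Sum>w\<in>?S. z2 w * \<gamma> w)"
    by (simp add: sum.distrib distrib_right)
  also have "(\<Sum>w\<in>?S. z1 w * \<gamma> w) = pairing z1 \<gamma>"
    by (rule pairing_superset[symmetric]) (use assms in auto)
  also have "(\<Sum>w\<in>?S. z2 w * \<gamma> w) = pairing z2 \<gamma>"
    by (rule pairing_superset[symmetric]) (use assms in auto)
  finally show ?thesis .
qed

lemma pairing_scal:
  assumes "fin z"
  shows "pairing (scal c z) \<gamma> = c * pairing z \<gamma>"
proof -
  have "pairing (scal c z) \<gamma> = (\<Sum>w\<in>{w. z w \<noteq> 0}. scal c z w * \<gamma> w)"
    by (rule pairing_superset) (use assms in \<open>auto simp: scal_def\<close>)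
  then show ?thesis by (simp add: pairing_def scal_def sum_distrib_left mult.assoc)
qed

lemma pairing_zero[simp]: "pairing 0 \<gamma> = 0"
  by (simp add: pairing_def)

lemma pairing_sum:
  "finite A \<Longrightarrow> (\<And>k. k \<in> A \<Longrightarrow> fin (f k)) \<Longrightarrow> pairing (\<Sum>k\<in>A. f k) \<gamma> = (\<Sum>k\<in>A. pairing (f k) \<gamma>)"
  by (induction A rule: finite_induct) (auto simp: pairing_add fin_sum)

lemma pairing_right_add: "pairing z (g1 + g2) = pairing z g1 + pairing z g2"
  by (simp add: pairing_def sum.distrib distrib_left)

lemma pairing_right_scal: "pairing z (scal c g) = c * pairing z g"
  by (simp add: pairing_def scal_def sum_distrib_left algebra_simps)

lemma pairing_diff:
  assumes "p \<noteq> q"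
  shows "pairing (word p - scal c (word q)) \<gamma> = \<gamma> p - c * \<gamma> q"
proof -
  have "pairing (word p - scal c (word q)) \<gamma> = (\<Sum>w\<in>{p, q}. (word p - scal c (word q)) w * \<gamma> w)"
    by (rule pairing_superset) (auto simp: word_def scal_def)
  then show ?thesis using assms by (simp add: word_def scal_def)
qed

lemma fmult_word_left:
  "fmult (word u) x w = (if take (length u) w = u then x (drop (length u) w) else 0)"
proof -
  have "fmult (word u) x w = (\<Sum>i\<le>length w. if i = length u \<and> take (length u) w = u then x (drop (length u) w) else 0)"
    unfolding fmult_def word_def
  proof (rule sum.cong)
    fix i assume "i \<in> {..length w}"
    then have i: "i \<le> length w" by simp
    show "(if take i w = u then 1 else 0) * x (drop i w) = (if i = length u \<and> take (length u) w = u then x (drop (length u) w) else 0)"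
    proof (cases "take i w = u")
      case True
      then have "length u = i" using i by auto
      then show ?thesis using True by simp
    next
      case False
      then show ?thesis by auto
    qed
  qed simp
  also have "\<dots> = (if take (length u) w = u then x (drop (length u) w) else 0)"
    by (cases "take (length u) w = u") (auto simp: sum.delta min_def dest: arg_cong[of _ _ length])
  finally show ?thesis .
qed

lemma fmult_word_left_app: "fmult (word u) x (u @ s) = x s"
  by (simp add: fmult_word_left)

lemma fmult_word_left_supp: "{w. fmult (word u) x w \<noteq> 0} = (\<lambda>s. u @ s) ` {s. x s \<noteq> 0}"
proof (rule set_eqI)
  fix w
  show "w \<in> {w. fmult (word u) x w \<noteq> 0} \<longleftrightarrow> w \<in> (\<lambda>s. u @ s) ` {s. x s \<noteq> 0}"
  proof
    assume "w \<in> {w. fmult (word u) x w \<noteq> 0}"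
    then have "take (length u) w = u" "x (drop (length u) w) \<noteq> 0"
      by (auto simp: fmult_word_left split: if_splits)
    then show "w \<in> (\<lambda>s. u @ s) ` {s. x s \<noteq> 0}"
      by (intro image_eqI[of _ _ "drop (length u) w"]) (auto, metis append_take_drop_id)
  qed (auto simp: fmult_word_left_app)
qed

lemma pairing_word_left:
  assumes "fin x"
  shows "pairing (fmult (word u) x) \<gamma> = pairing x (\<lambda>s. \<gamma> (u @ s))"
  unfolding pairing_def fmult_word_left_supp
  by (subst sum.reindex) (auto simp: fmult_word_left_app inj_on_def)

lemma fmult_word_right:
  "fmult x (word v) w = (if length v \<le> length w \<and> drop (length w - length v) w = v then x (take (length w - length v) w) else 0)"
proof -
  have "fmult x (word v) w = (\<Sum>i\<le>length w. if i = length w - length v \<and> length v \<le> length w \<and> drop (length w - length v) w = v then x (take (length w - length v) w) else 0)"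
    unfolding fmult_def word_def
    by (rule sum.cong) (auto dest: arg_cong[of _ _ length])
  also have "\<dots> = (if length v \<le> length w \<and> drop (length w - length v) w = v then x (take (length w - length v) w) else 0)"
    by (auto simp: sum.delta)
  finally show ?thesis .
qed

lemma fmult_word_right_app: "fmult x (word v) (s @ v) = x s"
  by (simp add: fmult_word_right)

lemma fmult_word_right_supp: "{w. fmult x (word v) w \<noteq> 0} = (\<lambda>s. s @ v) ` {s. x s \<noteq> 0}"
proof (rule set_eqI)
  fix w
  show "w \<in> {w. fmult x (word v) w \<noteq> 0} \<longleftrightarrow> w \<in> (\<lambda>s. s @ v) ` {s. x s \<noteq> 0}"
  proof
    assume "w \<in> {w. fmult x (word v) w \<noteq> 0}"
    then have "drop (length w - length v) w = v" "x (take (length w - length v) w) \<noteq> 0"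
      by (auto simp: fmult_word_right split: if_splits)
    then show "w \<in> (\<lambda>s. s @ v) ` {s. x s \<noteq> 0}"
      by (intro image_eqI[of _ _ "take (length w - length v) w"]) (auto, metis append_take_drop_id)
  qed (auto simp: fmult_word_right_app)
qed

lemma pairing_word_right:
  assumes "fin x"
  shows "pairing (fmult x (word v)) \<gamma> = pairing x (\<lambda>s. \<gamma> (s @ v))"
  unfolding pairing_def fmult_word_right_supp
  by (subst sum.reindex) (auto simp: fmult_word_right_app inj_on_def)

lemma fin_fmult:
  assumes "fin a" "fin x"
  shows "fin (fmult a x)"
proof (rule finite_subset)
  show "{w. fmult a x w \<noteq> 0} \<subseteq> (\<lambda>(u, v). u @ v) ` ({w. a w \<noteq> 0} \<times> {w. x w \<noteq> 0})"
  proof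
    fix w assume "w \<in> {w. fmult a x w \<noteq> 0}"
    then have "(\<Sum>i\<le>length w. a (take i w) * x (drop i w)) \<noteq> 0" by (simp add: fmult_def)
    then have "\<exists>i\<in>{..length w}. a (take i w) * x (drop i w) \<noteq> 0"
    proof (rule contrapos_pp)
      assume "\<not> (\<exists>i\<in>{..length w}. a (take i w) * x (drop i w) \<noteq> 0)"
      then have "\<forall>i\<in>{..length w}. a (take i w) * x (drop i w) = 0" by blast
      then show "\<not> (\<Sum>i\<le>length w. a (take i w) * x (drop i w)) \<noteq> 0" using sum.neutral by (metis (no_types, lifting))
    qed
    then obtain i where "a (take i w) * x (drop i w) \<noteq> 0" by blast
    then have "(take i w, drop i w) \<in> {w. a w \<noteq> 0} \<times> {w. x w \<noteq> 0}" by simp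
    moreover have "w = (\<lambda>(u, v). u @ v) (take i w, drop i w)" by simp
    ultimately show "w \<in> (\<lambda>(u, v). u @ v) ` ({w. a w \<noteq> 0} \<times> {w. x w \<noteq> 0})"
      by (rule rev_image_eqI)
  qed
  show "finite ((\<lambda>(u, v). u @ v) ` ({w. a w \<noteq> 0} \<times> {w. x w \<noteq> 0}))"
    using assms by (intro finite_imageI finite_cartesian_product)
qed

lemma fmult_add_left: "fmult (f + g) x = fmult f x + fmult g x"
  by (simp add: fmult_def fun_eq_iff sum.distrib distrib_right)

lemma fmult_scal_left: "fmult (scal c f) x = scal c (fmult f x)"
  by (simp add: fmult_def scal_def fun_eq_iff sum_distrib_left mult.assoc)

lemma fmult_zero_left: "fmult 0 x = 0"
  by (simp add: fmult_def fun_eq_iff)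

lemma fmult_sum_left: "fmult (\<Sum>k\<in>A. f k) x = (\<Sum>k\<in>A. fmult (f k) x)"
proof (induction A rule: infinite_finite_induct)
  case (infinite A) then show ?case by (simp only: sum.infinite[OF infinite] fmult_zero_left)
next
  case empty then show ?case by (simp only: sum.empty fmult_zero_left)
next
  case (insert a F)
  then show ?case by (simp only: sum.insert[OF insert(1,2)] fmult_add_left)
qed

lemma fmult_add_right: "fmult x (f + g) = fmult x f + fmult x g"
  by (simp add: fmult_def fun_eq_iff sum.distrib distrib_left)

lemma fmult_scal_right: "fmult x (scal c f) = scal c (fmult x f)"
  by (simp add: fmult_def scal_def fun_eq_iff sum_distrib_left algebra_simps)

lemma fmult_zero_right: "fmult x 0 = 0"
  by (simp add: fmult_def fun_eq_iff)

lemma fmult_sum_right: "fmult x (\<Sum>k\<in>A. f k) = (\<Sum>k\<in>A. fmult x (f k))"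
proof (induction A rule: infinite_finite_induct)
  case (infinite A) then show ?case by (simp only: sum.infinite[OF infinite] fmult_zero_right)
next
  case empty then show ?case by (simp only: sum.empty fmult_zero_right)
next
  case (insert a F)
  then show ?case by (simp only: sum.insert[OF insert(1,2)] fmult_add_right)
qed

lemma decomp: assumes "fin a" shows "a = (\<Sum>u\<in>{w. a w \<noteq> 0}. scal (a u) (word u))"
proof (rule ext)
  fix w
  have "(\<Sum>u\<in>{w. a w \<noteq> 0}. scal (a u) (word u)) w = (\<Sum>u\<in>{w. a w \<noteq> 0}. if u = w then a u else 0)"
    unfolding sum_fun_apply by (rule sum.cong) (auto simp: scal_def word_def)
  also have "\<dots> = a w" using assms by (simp add: sum.delta')
  finally show "a w = (\<Sum>u\<in>{w. a w \<noteq> 0}. scal (a u) (word u)) w" by simp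
qed



definition good :: "'a::linorder set \<Rightarrow> ('a \<Rightarrow> 'a \<Rightarrow> bool) \<Rightarrow> ('a list \<Rightarrow> qt) \<Rightarrow> bool" where
  "good P ltP \<gamma> \<longleftrightarrow>
    (\<forall>x y a c. set x \<subseteq> P \<longrightarrow> set y \<subseteq> P \<longrightarrow> a \<in> P \<longrightarrow> c \<in> P \<longrightarrow> ltP a c \<longrightarrow>
        \<gamma> (x @ [c, a] @ y) = \<gamma> (x @ [a, c] @ y))
  \<and> (\<forall>x y a b. set x \<subseteq> P \<longrightarrow> set y \<subseteq> P \<longrightarrow> a \<in> P \<longrightarrow> b \<in> P \<longrightarrow> a < b \<longrightarrow> incP ltP a b \<longrightarrow>
        \<gamma> (x @ [b, a] @ y) = tt * \<gamma> (x @ [a, b] @ y))"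

lemma goodD1: assumes "good P ltP \<gamma>" "set x \<subseteq> P" "set y \<subseteq> P" "a \<in> P" "c \<in> P" "ltP a c" shows
        "\<gamma> (x @ [c, a] @ y) = \<gamma> (x @ [a, c] @ y)"
  using assms(1)[unfolded good_def, THEN conjunct1, rule_format, OF assms(2-6)] .

lemma goodD2: assumes "good P ltP \<gamma>" "set x \<subseteq> P" "set y \<subseteq> P" "a \<in> P" "b \<in> P" "a < b" "incP ltP a b" shows
        "\<gamma> (x @ [b, a] @ y) = tt * \<gamma> (x @ [a, b] @ y)"
  using assms(1)[unfolded good_def, THEN conjunct2, rule_format, OF assms(2-7)] .

lemma good_shift_left:
  assumes "set u \<subseteq> P" "good P ltP \<gamma>"
  shows "good P ltP (\<lambda>s. \<gamma> (u @ s))"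
  unfolding good_def
proof (intro conjI allI impI)
  fix x y a c assume h: "set x \<subseteq> P" "set y \<subseteq> P" "a \<in> P" "c \<in> P" "ltP a c"
  show "\<gamma> (u @ x @ [c, a] @ y) = \<gamma> (u @ x @ [a, c] @ y)"
    using goodD1[OF assms(2), of "u @ x" y a c] h assms(1) by simp
next
  fix x y a b assume h: "set x \<subseteq> P" "set y \<subseteq> P" "a \<in> P" "b \<in> P" "a < b" "incP ltP a b"
  show "\<gamma> (u @ x @ [b, a] @ y) = tt * \<gamma> (u @ x @ [a, b] @ y)"
    using goodD2[OF assms(2), of "u @ x" y a b] h assms(1) by simp
qed

lemma good_shift_right:
  assumes "set v \<subseteq> P" "good P ltP \<gamma>"
  shows "good P ltP (\<lambda>s. \<gamma> (s @ v))"
  unfolding good_def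
proof (intro conjI allI impI)
  fix x y a c assume h: "set x \<subseteq> P" "set y \<subseteq> P" "a \<in> P" "c \<in> P" "ltP a c"
  show "\<gamma> ((x @ [c, a] @ y) @ v) = \<gamma> ((x @ [a, c] @ y) @ v)"
    using goodD1[OF assms(2), of x "y @ v" a c] h assms(1) by simp
next
  fix x y a b assume h: "set x \<subseteq> P" "set y \<subseteq> P" "a \<in> P" "b \<in> P" "a < b" "incP ltP a b"
  show "\<gamma> ((x @ [b, a] @ y) @ v) = tt * \<gamma> ((x @ [a, b] @ y) @ v)"
    using goodD2[OF assms(2), of x "y @ v" a b] h assms(1) by simp
qed


lemma fin_word: "fin (word u)"
  by (rule finite_subset[of _ "{u}"]) (auto simp: word_def)

lemma word_fsupp: "set u \<subseteq> P \<Longrightarrow> word u \<in> fsupp P"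
  by (auto simp: fsupp_def fin_word) (auto simp: word_def split: if_splits)


lemma scal_one: "scal 1 f = f"
  by (simp add: scal_def)

lemma fin_diff2: "fin (word p - scal k (word q))"
proof (rule finite_subset[of _ "{p, q}"])
  show "{w. (word p - scal k (word q)) w \<noteq> 0} \<subseteq> {p, q}"
  proof
    fix w assume "w \<in> {w. (word p - scal k (word q)) w \<noteq> 0}"
    then have "word p w - k * word q w \<noteq> 0" by (simp add: scal_def)
    then show "w \<in> {p, q}" unfolding word_def by (cases "w = p"; cases "w = q") auto
  qed
qed simp

lemma nuio_lt: "nuio P ltP \<Longrightarrow> a \<in> P \<Longrightarrow> c \<in> P \<Longrightarrow> ltP a c \<Longrightarrow> a < c"
  unfolding nuio_def by blast

lemma ideal_pairing:
  assumes N: "nuio P ltP" and z: "z \<in> ideal_gen P (gensT P ltP)"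
  shows "fin z \<and> (\<forall>\<gamma>. good P ltP \<gamma> \<longrightarrow> pairing z \<gamma> = 0)"
  using z
proof induction
  case (gen r)
  then show ?case
  proof (cases rule: UnE[OF gen[unfolded gensT_def]])
    case 1
    then obtain a c where r: "r = word [c, a] - word [a, c]" and h: "a \<in> P" "c \<in> P" "ltP a c" by blast
    have ne: "[c, a] \<noteq> [a, c]" using nuio_lt[OF N h] by auto
    have r': "r = word [c, a] - scal 1 (word [a, c])" using r by (simp add: scal_one)
    have "fin r" unfolding r' by (rule fin_diff2)
    moreover have "pairing r \<gamma> = 0" if "good P ltP \<gamma>" for \<gamma>
      using pairing_diff[OF ne, of 1 \<gamma>] goodD1[OF that, of "[]" "[]" a c] h r' by simp
    ultimately show ?thesis by blast
  next
    case 2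
    then obtain a b where r: "r = word [b, a] - scal tt (word [a, b])" and h: "a \<in> P" "b \<in> P" "a < b" "incP ltP a b" by blast
    have ne: "[b, a] \<noteq> [a, b]" using h by auto
    have "fin r" unfolding r by (rule fin_diff2)
    moreover have "pairing r \<gamma> = 0" if "good P ltP \<gamma>" for \<gamma>
      using pairing_diff[OF ne, of tt \<gamma>] goodD2[OF that, of "[]" "[]" a b] h r by simp
    ultimately show ?thesis by blast
  qed
next
  case zero
  then show ?case by (simp add: pairing_def)
next
  case (add x y)
  have fx: "fin x" and fy: "fin y" using add.IH by blast+
  have "pairing (x + y) \<gamma> = 0" if g: "good P ltP \<gamma>" for \<gamma>
  proof -
    have "pairing (x + y) \<gamma> = pairing x \<gamma> + pairing y \<gamma>" by (rule pairing_add[OF fx fy])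
    also have "\<dots> = 0" using add.IH g by simp
    finally show ?thesis .
  qed
  then show ?case using fin_add[OF fx fy] by blast
next
  case (lmult x a)
  have fa: "fin a" and sa: "\<And>w. a w \<noteq> 0 \<Longrightarrow> set w \<subseteq> P" using lmult.hyps(2) by (auto simp: fsupp_def)
  have fx: "fin x" using lmult.IH by blast
  let ?A = "{w. a w \<noteq> 0}"
  have eq: "fmult a x = (\<Sum>u\<in>?A. scal (a u) (fmult (word u) x))"
  proof -
    have "fmult a x = fmult (\<Sum>u\<in>?A. scal (a u) (word u)) x"
      using arg_cong[OF decomp[OF fa], of "\<lambda>f. fmult f x"] .
    also have "\<dots> = (\<Sum>u\<in>?A. scal (a u) (fmult (word u) x))"
      by (simp only: fmult_sum_left fmult_scal_left)
    finally show ?thesis .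
  qed
  have fins: "fin (scal (a u) (fmult (word u) x))" for u
    by (intro fin_scal fin_fmult fin_word fx)
  have "pairing (fmult a x) \<gamma> = 0" if g: "good P ltP \<gamma>" for \<gamma>
  proof -
    have "pairing (fmult a x) \<gamma> = (\<Sum>u\<in>?A. pairing (scal (a u) (fmult (word u) x)) \<gamma>)"
      unfolding eq by (rule pairing_sum) (use fa fins in auto)
    also have "\<dots> = (\<Sum>u\<in>?A. a u * pairing x (\<lambda>s. \<gamma> (u @ s)))"
      by (rule sum.cong) (auto simp: pairing_scal fin_fmult fin_word fx pairing_word_left)
    also have "\<dots> = 0"
      using lmult.IH good_shift_left[OF sa g] by (intro sum.neutral) auto
    finally show ?thesis .
  qed
  then show ?case using fin_fmult[OF fa fx] by blast
next
  case (rmult x a)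
  have fa: "fin a" and sa: "\<And>w. a w \<noteq> 0 \<Longrightarrow> set w \<subseteq> P" using rmult.hyps(2) by (auto simp: fsupp_def)
  have fx: "fin x" using rmult.IH by blast
  let ?A = "{w. a w \<noteq> 0}"
  have eq: "fmult x a = (\<Sum>u\<in>?A. scal (a u) (fmult x (word u)))"
  proof -
    have "fmult x a = fmult x (\<Sum>u\<in>?A. scal (a u) (word u))"
      using arg_cong[OF decomp[OF fa], of "\<lambda>f. fmult x f"] .
    also have "\<dots> = (\<Sum>u\<in>?A. scal (a u) (fmult x (word u)))"
      by (simp only: fmult_sum_right fmult_scal_right)
    finally show ?thesis .
  qed
  have fins: "fin (scal (a u) (fmult x (word u)))" for u
    by (intro fin_scal fin_fmult fin_word fx)
  have "pairing (fmult x a) \<gamma> = 0" if g: "good P ltP \<gamma>" for \<gamma>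
  proof -
    have "pairing (fmult x a) \<gamma> = (\<Sum>u\<in>?A. pairing (scal (a u) (fmult x (word u))) \<gamma>)"
      unfolding eq by (rule pairing_sum) (use fa fins in auto)
    also have "\<dots> = (\<Sum>u\<in>?A. a u * pairing x (\<lambda>s. \<gamma> (s @ u)))"
      by (rule sum.cong) (auto simp: pairing_scal fin_fmult fin_word fx pairing_word_right)
    also have "\<dots> = 0"
      using rmult.IH good_shift_right[OF sa g] by (intro sum.neutral) auto
    finally show ?thesis .
  qed
  then show ?case using fin_fmult[OF fx fa] by blast
qed



lemma incP_sym: "incP ltP a b \<Longrightarrow> incP ltP b a"
  unfolding incP_def by blast

lemma nuio_notboth: "nuio P ltP \<Longrightarrow> a \<in> P \<Longrightarrow> b \<in> P \<Longrightarrow> a < b \<Longrightarrow> \<not> ltP b a"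
  using nuio_lt[of P ltP b a] by auto

lemma mset_swap: "mset (x @ [b, a] @ y) = mset (x @ [a, b] @ y)"
  by (simp add: add_mset_commute)

lemma invP_swap_comp:
  assumes "ltP a c"
  shows "invP ltP (x @ [c, a] @ y) = invP ltP (x @ [a, c] @ y)"
proof -
  have "\<not> incP ltP a c" "\<not> incP ltP c a" using assms unfolding incP_def by blast+
  then show ?thesis
    using invR_swap[of "\<lambda>x y. x > y \<and> incP ltP x y" x c a y] by (simp add: invP_invR)
qed

lemma invP_swap_inc:
  assumes "a < b" "incP ltP a b"
  shows "invP ltP (x @ [b, a] @ y) = invP ltP (x @ [a, b] @ y) + 1"
proof -
  have "incP ltP b a" using assms(2) by (rule incP_sym)
  moreover have "\<not> b < a" using assms(1) by simp
  ultimately show ?thesis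
    using invR_swap[of "\<lambda>x y. x > y \<and> incP ltP x y" x b a y] assms by (simp add: invP_invR)
qed

lemma Wt_good: "good P ltP (Wt ltP \<beta>)"
  unfolding good_def
proof (intro conjI allI impI)
  fix x y a c assume h: "set x \<subseteq> P" "set y \<subseteq> P" "a \<in> P" "c \<in> P" "ltP a c"
  show "Wt ltP \<beta> (x @ [c, a] @ y) = Wt ltP \<beta> (x @ [a, c] @ y)"
    unfolding Wt_def using invP_swap_comp[of ltP a c x y, OF h(5)] by (simp add: add_mset_commute)
next
  fix x y a b assume h: "set x \<subseteq> P" "set y \<subseteq> P" "a \<in> P" "b \<in> P" "a < b" "incP ltP a b"
  show "Wt ltP \<beta> (x @ [b, a] @ y) = tt * Wt ltP \<beta> (x @ [a, b] @ y)"
    unfolding Wt_def using invP_swap_inc[OF h(5,6), of x y] by (simp add: add_mset_commute)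
qed

lemma Wt_fsupp: "set_mset \<beta> \<subseteq> P \<Longrightarrow> Wt ltP \<beta> \<in> fsupp P"
proof -
  assume b: "set_mset \<beta> \<subseteq> P"
  have "{w. Wt ltP \<beta> w \<noteq> 0} \<subseteq> {w. set w \<subseteq> set_mset \<beta> \<and> length w = size \<beta>}"
    by (auto simp: Wt_def split: if_splits)
  then have "fin (Wt ltP \<beta>)" by (rule finite_subset) (rule finite_lists_length_eq, simp)
  moreover have "set w \<subseteq> P" if "Wt ltP \<beta> w \<noteq> 0" for w
    using that b by (auto simp: Wt_def split: if_splits)
  ultimately show ?thesis by (simp add: fsupp_def)
qed

lemma sort_eq_mset: "mset w = mset w' \<Longrightarrow> sort w = sort w'"
  by (metis sorted_list_of_multiset_mset)

lemma key:
  assumes N: "nuio P ltP" and g: "good P ltP \<gamma>" and s: "set w \<subseteq> P"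
  shows "\<gamma> w = tt ^ invP ltP w * \<gamma> (sort w)"
  using s
proof (induction "invR (\<lambda>x y. x > y) w" arbitrary: w rule: less_induct)
  case less
  show ?case
  proof (cases "sorted w")
    case True
    then have "invP ltP w = 0" by (simp add: invP_invR sorted_invR)
    moreover have "sort w = w" using True by (simp add: sorted_sort_id)
    ultimately show ?thesis by simp
  next
    case False
    then obtain x b a y where w: "w = x @ [b, a] @ y" and ab: "a < b" using not_sorted_descent by blast
    let ?w' = "x @ [a, b] @ y"
    have "invR (\<lambda>x y. x > y) w = invR (\<lambda>x y. x > y) ?w' + 1"
    proof -
      have "\<not> b < a" using ab by simp
      then show ?thesis using invR_swap[of "\<lambda>x y. x > y" x b a y] ab w by simp
    qed
    then have lt: "invR (\<lambda>x y. x > y) ?w' < invR (\<lambda>x y. x > y) w" by simp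
    have s': "set ?w' \<subseteq> P" using less.prems w by auto
    have IH: "\<gamma> ?w' = tt ^ invP ltP ?w' * \<gamma> (sort ?w')" using less.hyps[OF lt s'] .
    have so: "sort ?w' = sort w" using w mset_swap[of x b a y] sort_eq_mset by metis
    have P: "set x \<subseteq> P" "set y \<subseteq> P" "a \<in> P" "b \<in> P" using less.prems w by auto
    show ?thesis
    proof (cases "ltP a b")
      case True
      have "\<gamma> w = \<gamma> ?w'" using goodD1[OF g P(1,2,3,4) True] w by simp
      moreover have "invP ltP w = invP ltP ?w'" using invP_swap_comp[of ltP a b x y, OF True] w by simp
      ultimately show ?thesis using IH so by simp
    next
      case False
      moreover have "\<not> ltP b a" using nuio_notboth[OF N P(3,4) ab] .
      ultimately have inc: "incP ltP a b" unfolding incP_def by blast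
      have "\<gamma> w = tt * \<gamma> ?w'" using goodD2[OF g P(1,2,3,4) ab inc] w by simp
      moreover have "invP ltP w = invP ltP ?w' + 1" using invP_swap_inc[OF ab inc] w by simp
      ultimately show ?thesis using IH so by (simp add: mult.assoc)
    qed
  qed
qed

lemma perp_good:
  assumes N: "nuio P ltP" and gp: "\<gamma> \<in> perp P (IT P ltP)"
  shows "good P ltP \<gamma>"
proof -
  have z0: "pairing z \<gamma> = 0" if "z \<in> IT P ltP" for z using gp that by (simp add: perp_def)
  have main: "\<gamma> (x @ p @ y) - k * \<gamma> (x @ q @ y) = 0"
    if "set x \<subseteq> P" "set y \<subseteq> P" "p \<noteq> q" "word p - scal k (word q) \<in> gensT P ltP" for x y p q k
  proof -
    let ?g = "word p - scal k (word q)"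
    have "fmult (word x) (fmult ?g (word y)) \<in> IT P ltP"
      unfolding IT_def
      by (intro ideal_gen.lmult ideal_gen.rmult ideal_gen.gen word_fsupp that)
    then have "0 = pairing (fmult (word x) (fmult ?g (word y))) \<gamma>" using z0 by simp
    also have "\<dots> = pairing (fmult ?g (word y)) (\<lambda>s. \<gamma> (x @ s))"
      by (rule pairing_word_left) (intro fin_fmult fin_diff2 fin_word)
    also have "\<dots> = pairing ?g (\<lambda>s. \<gamma> (x @ s @ y))"
      using pairing_word_right[OF fin_diff2[of p k q], of y "\<lambda>s. \<gamma> (x @ s)"] by (simp only: append.assoc)
    also have "\<dots> = \<gamma> (x @ p @ y) - k * \<gamma> (x @ q @ y)"
      by (rule pairing_diff) (rule that)
    finally show ?thesis by simp
  qed
  show ?thesis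
    unfolding good_def
  proof (intro conjI allI impI)
    fix x y a c assume h: "set x \<subseteq> P" "set y \<subseteq> P" "a \<in> P" "c \<in> P" "ltP a c"
    have G: "word [c, a] - scal 1 (word [a, c]) \<in> gensT P ltP"
      unfolding gensT_def scal_one
      by (rule UnI1, rule CollectI, rule exI[of _ a], rule exI[of _ c]) (use h in simp)
    have ne: "[c, a] \<noteq> [a, c]" using nuio_lt[OF N h(3,4,5)] by auto
    show "\<gamma> (x @ [c, a] @ y) = \<gamma> (x @ [a, c] @ y)"
      using main[OF h(1,2) ne G] by simp
  next
    fix x y a b assume h: "set x \<subseteq> P" "set y \<subseteq> P" "a \<in> P" "b \<in> P" "a < b" "incP ltP a b"
    have G: "word [b, a] - scal tt (word [a, b]) \<in> gensT P ltP"
      unfolding gensT_def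
      by (rule UnI2, rule CollectI, rule exI[of _ a], rule exI[of _ b]) (use h in simp)
    have ne: "[b, a] \<noteq> [a, b]" using h by auto
    show "\<gamma> (x @ [b, a] @ y) = tt * \<gamma> (x @ [a, b] @ y)"
      using main[OF h(1,2) ne G] by simp
  qed
qed



lemma Wt_perp:
  assumes N: "nuio P ltP" and b: "set_mset \<beta> \<subseteq> P"
  shows "Wt ltP \<beta> \<in> perp P (IT P ltP)"
proof -
  have "pairing z (Wt ltP \<beta>) = 0" if "z \<in> IT P ltP" for z
    using ideal_pairing[OF N that[unfolded IT_def]] Wt_good[of P ltP \<beta>] by simp
  then show ?thesis using Wt_fsupp[OF b, of ltP] unfolding perp_def by simp
qed

lemma Wt_nz: "mset w = \<beta> \<Longrightarrow> Wt ltP \<beta> w \<noteq> 0"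
  by (simp add: Wt_def tt_nz)

lemma Wt_z: "mset w \<noteq> \<beta> \<Longrightarrow> Wt ltP \<beta> w = 0"
  by (simp add: Wt_def)

theorem mainTheorem6:
  fixes P :: "'a::linorder set" and ltP :: "'a \<Rightarrow> 'a \<Rightarrow> bool"
  assumes "nuio P ltP"
  shows "(\<forall>\<beta>. set_mset \<beta> \<subseteq> P \<longrightarrow> Wt ltP \<beta> \<in> perp P (IT P ltP))
    \<and> inj_on (Wt ltP) {\<beta>. set_mset \<beta> \<subseteq> P}
    \<and> \<not> module.dependent scal (Wt ltP ` {\<beta>. set_mset \<beta> \<subseteq> P})
    \<and> module.span scal (Wt ltP ` {\<beta>. set_mset \<beta> \<subseteq> P}) = perp P (IT P ltP)"
proof -
  interpret qm: module "scal :: qt \<Rightarrow> ('a list \<Rightarrow> qt) \<Rightarrow> ('a list \<Rightarrow> qt)"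
    by unfold_locales (auto simp: scal_def fun_eq_iff algebra_simps)
  let ?B = "{\<beta>. set_mset \<beta> \<subseteq> P}"
  have part1: "\<forall>\<beta>. set_mset \<beta> \<subseteq> P \<longrightarrow> Wt ltP \<beta> \<in> perp P (IT P ltP)"
    using Wt_perp[OF assms] by blast
  have part2: "inj_on (Wt ltP) ?B"
  proof (rule inj_onI)
    fix b1 b2 assume "Wt ltP b1 = Wt ltP b2"
    moreover obtain w where w: "mset w = b1" using ex_mset by blast
    ultimately have "Wt ltP b2 w \<noteq> 0" using Wt_nz[OF w, of ltP] by simp
    then show "b1 = b2" using w Wt_z by metis
  qed
  have part3: "\<not> qm.dependent (Wt ltP ` ?B)"
  proof
    assume "qm.dependent (Wt ltP ` ?B)"
    then obtain t u v0 where t: "finite t" "t \<subseteq> Wt ltP ` ?B" and s: "(\<Sum>v\<in>t. scal (u v) v) = 0"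
      and v0: "v0 \<in> t" "u v0 \<noteq> 0"
      unfolding qm.dependent_explicit by blast
    obtain \<beta>0 where b0: "v0 = Wt ltP \<beta>0" using v0(1) t(2) by blast
    obtain w where w: "mset w = \<beta>0" using ex_mset by blast
    have "0 = (\<Sum>v\<in>t. scal (u v) v) w" using s by simp
    also have "\<dots> = (\<Sum>v\<in>t. u v * v w)" by (simp add: sum_fun_apply scal_def)
    also have "\<dots> = u v0 * v0 w + (\<Sum>v\<in>t - {v0}. u v * v w)"
      by (rule sum.remove[OF t(1) v0(1)])
    also have "(\<Sum>v\<in>t - {v0}. u v * v w) = 0"
    proof (rule sum.neutral, rule ballI)
      fix v assume v: "v \<in> t - {v0}"
      then obtain \<beta> where b: "v = Wt ltP \<beta>" using t(2) by blast
      then have "\<beta> \<noteq> \<beta>0" using v b0 by auto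
      then have "v w = 0" using b w Wt_z by metis
      then show "u v * v w = 0" by simp
    qed
    finally have "u v0 * v0 w = 0" by simp
    moreover have "v0 w \<noteq> 0" using b0 w Wt_nz by metis
    ultimately show False using v0(2) by simp
  qed
  have sub: "qm.subspace (perp P (IT P ltP))"
  proof (rule qm.subspaceI)
    show "0 \<in> perp P (IT P ltP)"
      by (simp add: perp_def fsupp_def pairing_def)
  next
    fix x y assume x: "x \<in> perp P (IT P ltP)" and y: "y \<in> perp P (IT P ltP)"
    have fx: "fin x" "\<And>w. x w \<noteq> 0 \<Longrightarrow> set w \<subseteq> P" using x by (auto simp: perp_def fsupp_def)
    have fy: "fin y" "\<And>w. y w \<noteq> 0 \<Longrightarrow> set w \<subseteq> P" using y by (auto simp: perp_def fsupp_def)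
    have "fin (x + y)" by (rule fin_add[OF fx(1) fy(1)])
    moreover have "set w \<subseteq> P" if "(x + y) w \<noteq> 0" for w
      using that fx(2) fy(2) by (cases "x w = 0") auto
    moreover have "pairing z (x + y) = 0" if "z \<in> IT P ltP" for z
      using x y that by (simp add: pairing_right_add perp_def)
    ultimately show "x + y \<in> perp P (IT P ltP)" by (simp add: perp_def fsupp_def)
  next
    fix c x assume x: "x \<in> perp P (IT P ltP)"
    have fx: "fin x" "\<And>w. x w \<noteq> 0 \<Longrightarrow> set w \<subseteq> P" using x by (auto simp: perp_def fsupp_def)
    have "fin (scal c x)" by (rule fin_scal[OF fx(1)])
    moreover have "set w \<subseteq> P" if "scal c x w \<noteq> 0" for w
      using that fx(2) by (auto simp: scal_def)
    moreover have "pairing z (scal c x) = 0" if "z \<in> IT P ltP" for z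
      using x that by (simp add: pairing_right_scal perp_def)
    ultimately show "scal c x \<in> perp P (IT P ltP)" by (simp add: perp_def fsupp_def)
  qed
  have le: "qm.span (Wt ltP ` ?B) \<subseteq> perp P (IT P ltP)"
    by (rule qm.span_minimal[OF _ sub]) (use part1 in auto)
  have ge: "perp P (IT P ltP) \<subseteq> qm.span (Wt ltP ` ?B)"
  proof
    fix \<gamma> assume gp: "\<gamma> \<in> perp P (IT P ltP)"
    have fg: "fin \<gamma>" and sg: "\<And>w. \<gamma> w \<noteq> 0 \<Longrightarrow> set w \<subseteq> P" using gp by (auto simp: perp_def fsupp_def)
    have g: "good P ltP \<gamma>" by (rule perp_good[OF assms gp])
    let ?S = "{w. \<gamma> w \<noteq> 0}"
    let ?M = "mset ` ?S"
    have eq: "\<gamma> = (\<Sum>\<beta>\<in>?M. scal (\<gamma> (sorted_list_of_multiset \<beta>)) (Wt ltP \<beta>))"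
    proof (rule ext)
      fix w
      have "(\<Sum>\<beta>\<in>?M. scal (\<gamma> (sorted_list_of_multiset \<beta>)) (Wt ltP \<beta>)) w
          = (\<Sum>\<beta>\<in>?M. if \<beta> = mset w then \<gamma> (sort w) * tt ^ invP ltP w else 0)"
        unfolding sum_fun_apply
      proof (rule sum.cong)
        fix \<beta> assume "\<beta> \<in> ?M"
        show "scal (\<gamma> (sorted_list_of_multiset \<beta>)) (Wt ltP \<beta>) w = (if \<beta> = mset w then \<gamma> (sort w) * tt ^ invP ltP w else 0)"
          by (cases "\<beta> = mset w") (simp_all add: scal_def Wt_def)
      qed (rule refl)
      also have "\<dots> = (if mset w \<in> ?M then \<gamma> (sort w) * tt ^ invP ltP w else 0)"
        by (rule sum.delta) (rule finite_imageI[OF fg])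
      also have "\<dots> = \<gamma> w"
      proof (cases "mset w \<in> ?M")
        case True
        then obtain w' where w': "\<gamma> w' \<noteq> 0" "mset w = mset w'" by auto
        have "set w \<subseteq> P" using sg[OF w'(1)] w'(2) by (metis set_mset_mset)
        then have "\<gamma> w = tt ^ invP ltP w * \<gamma> (sort w)" by (rule key[OF assms g])
        then show ?thesis using True by (simp only: if_True mult.commute)
      next
        case False
        then have "\<gamma> w = 0" by (metis (mono_tags, lifting) image_eqI mem_Collect_eq)
        then show ?thesis using False by (simp only: if_False)
      qed
      finally show "\<gamma> w = (\<Sum>\<beta>\<in>?M. scal (\<gamma> (sorted_list_of_multiset \<beta>)) (Wt ltP \<beta>)) w" by simp
    qed
    have "(\<Sum>\<beta>\<in>?M. scal (\<gamma> (sorted_list_of_multiset \<beta>)) (Wt ltP \<beta>)) \<in> qm.span (Wt ltP ` ?B)"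
    proof (rule qm.span_sum)
      fix \<beta> assume "\<beta> \<in> ?M"
      then obtain w' where w': "\<gamma> w' \<noteq> 0" "\<beta> = mset w'" by auto
      then have "set_mset \<beta> \<subseteq> P" using sg by auto
      then have "Wt ltP \<beta> \<in> Wt ltP ` ?B" by auto
      then show "scal (\<gamma> (sorted_list_of_multiset \<beta>)) (Wt ltP \<beta>) \<in> qm.span (Wt ltP ` ?B)"
        by (intro qm.span_scale qm.span_base)
    qed
    then show "\<gamma> \<in> qm.span (Wt ltP ` ?B)" using eq by simp
  qed
  have eqs: "qm.span (Wt ltP ` ?B) = perp P (IT P ltP)" using le ge by (rule equalityI)
  show ?thesis by (intro conjI part1 part2 part3 eqs)
qed


end
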